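(* Let $L,L',q\in\mathbb{N}$, $x\in\mathbb{Z}$, with $L'\leq L/\lambda(q)$. If $B\subseteq[1,L]$ and $B'\subseteq\{\ell\in[1,L']: x+\ell\lambda(q)\in B\}$, then for every $d\in\mathbb{N}$, $$\mathcal{R}_{qd}(B',L')\leq\mathcal{R}_d(B,L).$$
   Context: Let $h\in\mathbb{Z}[x]$ have degree $k\ge2$ and positive leading coefficient, and be $\mathcal{P}$-intersective: for every prime $p$ there is $z_p\in\mathbb{Z}_p$ with $h(z_p)=0$, $z_p\not\equiv0\bmod p$; fix such $z_p$. Let $s=2^k+6$. For $d\in\mathbb{N}$, $r_d$ is the unique integer in $(-d,0]$ with $r_d\equiv z_p\bmod p^{v_p(d)}$ for all primes $p\mid d$. $\lambda$ is completely multiplicative with $\lambda(p)=p^m$, $m$ the multiplicity of $z_p$ as a root of $h$. $h_d(x)=h(r_d+dx)/\lambda(d)$; $\Lambda_d=\{x\in\mathbb{N}:r_d+dx\text{ prime}\}$; $\nu_d(x)=\frac{\phi(d)}{d}\log(r_d+dx)1_{\Lambda_d}(x)$; $H_d(L)=\{y\in\mathbb{N}:0<h_d(y)<L/s\}$; and for $B\subseteq[1,L]$, $\mathcal{R}_d(B,L)=\sum_{x\in\mathbb{Z},\,y\in H_d(L)}1_B(x)1_B(x+h_d(y))\nu_d(y)$. Here $[1,L]=\{1,\dots,L\}$. *)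

theory Defs
  imports "HOL-Number_Theory.Number_Theory" "HOL-Computational_Algebra.Polynomial"
begin

text \<open>A p-adic integer z_p is represented by its coherent sequence of residues
  zs n = z_p mod p^n, with 0 \<le> zs n < p^n.\<close>
definition padic_seq :: "nat \<Rightarrow> (nat \<Rightarrow> int) \<Rightarrow> bool" where
  "padic_seq p zs \<longleftrightarrow> (\<forall>n. 0 \<le> zs n \<and> zs n < int p ^ n) \<and>
                       (\<forall>n. zs (Suc n) mod int p ^ n = zs n)"

definition padic_vanishes :: "int poly \<Rightarrow> nat \<Rightarrow> (nat \<Rightarrow> int) \<Rightarrow> bool" where
  "padic_vanishes f p zs \<longleftrightarrow> (\<forall>n. int p ^ n dvd poly f (zs n))"

definition intersective_roots :: "int poly \<Rightarrow> (nat \<Rightarrow> nat \<Rightarrow> int) \<Rightarrow> bool" where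
  "intersective_roots h z \<longleftrightarrow>
     (\<forall>p. prime p \<longrightarrow> padic_seq p (z p) \<and> padic_vanishes h p (z p) \<and> \<not> int p dvd z p 1)"

text \<open>Multiplicity of the p-adic root z_p of h (characteristic 0 domain Z_p):
  least m with h^(m)(z_p) \<noteq> 0.\<close>
definition root_mult :: "int poly \<Rightarrow> nat \<Rightarrow> (nat \<Rightarrow> int) \<Rightarrow> nat" where
  "root_mult h p zs = (LEAST m. \<not> padic_vanishes ((pderiv ^^ m) h) p zs)"

definition lam :: "int poly \<Rightarrow> (nat \<Rightarrow> nat \<Rightarrow> int) \<Rightarrow> nat \<Rightarrow> nat" where
  "lam h z d = (\<Prod>p\<in>prime_factors d. p ^ (root_mult h p (z p) * multiplicity p d))"

definition rd :: "(nat \<Rightarrow> nat \<Rightarrow> int) \<Rightarrow> nat \<Rightarrow> int" where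
  "rd z d = (THE r. - int d < r \<and> r \<le> 0 \<and>
      (\<forall>p\<in>prime_factors d. [r = z p (multiplicity p d)] (mod (int p ^ multiplicity p d))))"

text \<open>h_d(y) = h(r_d + d y) / lambda(d) (an integer).\<close>
definition hd :: "int poly \<Rightarrow> (nat \<Rightarrow> nat \<Rightarrow> int) \<Rightarrow> nat \<Rightarrow> int \<Rightarrow> int" where
  "hd h z d y = poly h (rd z d + int d * y) div int (lam h z d)"

definition nu :: "(nat \<Rightarrow> nat \<Rightarrow> int) \<Rightarrow> nat \<Rightarrow> int \<Rightarrow> real" where
  "nu z d y = (if 1 \<le> y \<and> prime (rd z d + int d * y)
               then real (totient d) / real d * ln (real_of_int (rd z d + int d * y)) else 0)"

definition sconst :: "int poly \<Rightarrow> nat" where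
  "sconst h = 2 ^ degree h + 6"

definition Hset :: "int poly \<Rightarrow> (nat \<Rightarrow> nat \<Rightarrow> int) \<Rightarrow> nat \<Rightarrow> nat \<Rightarrow> int set" where
  "Hset h z d L = {y. 1 \<le> y \<and> 0 < hd h z d y \<and> real_of_int (hd h z d y) < real L / real (sconst h)}"

definition Rcount :: "int poly \<Rightarrow> (nat \<Rightarrow> nat \<Rightarrow> int) \<Rightarrow> nat \<Rightarrow> int set \<Rightarrow> nat \<Rightarrow> real" where
  "Rcount h z d B L = (\<Sum>x\<in>B. \<Sum>y\<in>Hset h z d L.
       (if x + hd h z d y \<in> B then nu z d y else 0))"

end

theory Submission imports Defs begin
lemma padic_coh:
  assumes "padic_seq p zs" "prime p" "k \<le> n"
  shows "zs n mod int p ^ k = zs k"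
  using assms(3)
proof (induction n rule: dec_induct)
  case base
  then show ?case using assms(1) unfolding padic_seq_def by (simp add: mod_pos_pos_trivial)
next
  case (step n)
  have "zs (Suc n) mod int p ^ k = (zs (Suc n) mod int p ^ n) mod int p ^ k"
    using step(1) by (simp add: mod_mod_cancel le_imp_power_dvd)
  also have "\<dots> = zs n mod int p ^ k" using assms(1) unfolding padic_seq_def by simp
  finally show ?case using step by simp
qed

lemma prod_dvd_coprime_int:
  fixes f :: "'a \<Rightarrow> int"
  assumes "finite A" "\<And>i j. i\<in>A \<Longrightarrow> j\<in>A \<Longrightarrow> i\<noteq>j \<Longrightarrow> coprime (f i) (f j)"
    "\<And>i. i\<in>A \<Longrightarrow> f i dvd a"
  shows "prod f A dvd a"
  using assms
proof (induction A rule: finite_induct)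
  case empty then show ?case by simp
next
  case (insert x F)
  have "coprime (f x) (prod f F)"
    by (rule prod_coprime_right) (use insert in auto)
  moreover have "prod f F dvd a" using insert by auto
  ultimately show ?case using insert by (simp add: divides_mult)
qed

lemma coeff_pderiv_funpow: "coeff ((pderiv ^^ j) g) 0 = of_nat (fact j) * coeff g j"
proof (induction j arbitrary: g)
  case 0 then show ?case by simp
next
  case (Suc j)
  have "(pderiv ^^ Suc j) g = (pderiv ^^ j) (pderiv g)" by (simp add: funpow_Suc_right del: funpow.simps)
  then show ?case using Suc[of "pderiv g"] by (simp add: coeff_pderiv algebra_simps)
qed

lemma pderiv_funpow_pcompose:
  fixes h :: "int poly"
  shows "(pderiv ^^ j) (pcompose h [:w,1:]) = pcompose ((pderiv ^^ j) h) [:w,1:]"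
  by (induction j) (auto simp: pderiv_pcompose pderiv_pCons)

lemma taylor_coeff:
  fixes h :: "int poly"
  shows "of_nat (fact j) * coeff (pcompose h [:w,1:]) j = poly ((pderiv ^^ j) h) w"
proof -
  have "poly ((pderiv ^^ j) h) w = poly ((pderiv ^^ j) (pcompose h [:w,1:])) 0"
    by (simp add: pderiv_funpow_pcompose poly_pcompose)
  also have "\<dots> = coeff ((pderiv ^^ j) (pcompose h [:w,1:])) 0" by (simp add: poly_0_coeff_0)
  finally show ?thesis by (simp add: coeff_pderiv_funpow)
qed

lemma padic_taylor:
  fixes h :: "int poly"
  assumes p: "prime p" and zs: "padic_seq p zs"
    and van: "\<And>j. j < m \<Longrightarrow> padic_vanishes ((pderiv ^^ j) h) p zs"
    and t: "[t = zs k] (mod int p ^ k)"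
  shows "int p ^ (m * k) dvd poly h t"
proof -
  define E where "E = multiplicity (int p) (int (fact m))"
  define N where "N = m * k + E + k"
  define w where "w = zs N"
  define G where "G = pcompose h [:w,1:]"
  have pi: "prime (int p)" using p by simp
  have wk: "[w = zs k] (mod int p ^ k)"
    using padic_coh[OF zs p, of k N] unfolding w_def N_def cong_def
    by (simp add: padic_coh[OF zs p] mod_pos_pos_trivial)
  then have "int p ^ k dvd t - w" using t by (metis cong_iff_dvd_diff cong_sym cong_trans)
  then obtain u where u: "t - w = int p ^ k * u" by (auto elim: dvdE)
  have ht: "poly h t = poly G (t - w)" unfolding G_def by (simp add: poly_pcompose)
  also have "\<dots> = (\<Sum>j\<le>degree G. coeff G j * (t - w) ^ j)" by (simp add: poly_altdef)
  finally have ht: "poly h t = (\<Sum>j\<le>degree G. coeff G j * (t - w) ^ j)" .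
  have cj: "int p ^ (m * k) dvd coeff G j" if "j < m" for j
  proof -
    have "int p ^ N dvd poly ((pderiv ^^ j) h) w"
      using van[OF that] unfolding padic_vanishes_def w_def by blast
    then have d1: "int p ^ N dvd int (fact j) * coeff G j"
      using taylor_coeff[of j h w] unfolding G_def by simp
    have fj0: "int (fact j) \<noteq> 0" by simp
    obtain e c where ec: "int (fact j) = int p ^ e * c" "\<not> int p dvd c"
      using multiplicity_decompose'[OF fj0, of "int p"] pi
      by (metis multiplicity_dvd' multiplicity_decompose' not_prime_unit)
    have "e \<le> E"
    proof -
      have "int p ^ e dvd int (fact m)"
        using ec(1) fact_dvd[of j m] that by (metis dvd_trans dvd_triv_left less_imp_le of_nat_dvd_iff)
      then show ?thesis unfolding E_def
        using p by (intro multiplicity_geI) (auto simp: pi not_prime_unit prime_gt_1_nat)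
    qed
    then have "int p ^ (m*k + e) dvd int p ^ N" unfolding N_def by (intro le_imp_power_dvd) simp
    then have "int p ^ (m*k) * int p ^ e dvd int p ^ e * (c * coeff G j)"
      using d1 ec(1) by (metis dvd_trans mult.assoc power_add)
    then have "int p ^ (m*k) dvd c * coeff G j"
      using pi by (metis mult.commute dvd_mult_cancel_left not_prime_0 power_not_zero mult_dvd_mono dvd_times_left_cancel_iff)
    moreover have "coprime (int p ^ (m*k)) c"
      using ec(2) pi by (simp add: prime_imp_coprime)
    ultimately show ?thesis by (simp add: coprime_dvd_mult_right_iff)
  qed
  show ?thesis unfolding ht
  proof (rule dvd_sum)
    fix j assume "j \<in> {..degree G}"
    show "int p ^ (m * k) dvd coeff G j * (t - w) ^ j"
    proof (cases "j < m")
      case True then show ?thesis using cj by simp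
    next
      case False
      have "int p ^ (m*k) dvd int p ^ (k*j)" using False by (intro le_imp_power_dvd) (simp add: mult.commute)
      also have "int p ^ (k*j) dvd (t - w) ^ j" unfolding u by (simp add: power_mult power_mult_distrib)
      finally show ?thesis by simp
    qed
  qed
qed

lemma pp_coprime:
  assumes "p \<in> prime_factors D" "p' \<in> prime_factors D" "p \<noteq> p'"
  shows "coprime (int p ^ a) (int p' ^ b)"
proof -
  have "prime p" "prime p'" using assms by auto
  then have "coprime p p'" using assms(3) by (simp add: primes_coprime)
  then show ?thesis by simp
qed

lemma prod_pf_int: "D > 0 \<Longrightarrow> (\<Prod>p\<in>prime_factors D. int p ^ multiplicity p D) = int D"
  using prime_factorization_nat[of D] by (metis (mono_tags, lifting) of_nat_power of_nat_prod prod.cong)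

lemma cong_all_pf:
  assumes "D > 0" "\<And>p. p \<in> prime_factors D \<Longrightarrow> [a = b] (mod int p ^ multiplicity p D)"
  shows "[a = (b::int)] (mod int D)"
proof -
  have "(\<Prod>p\<in>prime_factors D. int p ^ multiplicity p D) dvd a - b"
    by (rule prod_dvd_coprime_int) (use assms pp_coprime in \<open>auto simp: cong_iff_dvd_diff\<close>)
  then show ?thesis using prod_pf_int[OF assms(1)] by (simp add: cong_iff_dvd_diff)
qed

lemma pf_dvd_D: "p \<in> prime_factors D \<Longrightarrow> int p ^ multiplicity p D dvd int D"
  by (metis multiplicity_dvd of_nat_dvd_iff of_nat_power)

lemma rd_spec:
  assumes ir: "intersective_roots h z" and D: "D \<ge> 1"
  shows "- int D < rd z D \<and> rd z D \<le> 0 \<and>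
      (\<forall>p\<in>prime_factors D. [rd z D = z p (multiplicity p D)] (mod (int p ^ multiplicity p D)))"
proof -
  let ?P = "\<lambda>r. - int D < r \<and> r \<le> 0 \<and>
      (\<forall>p\<in>prime_factors D. [r = z p (multiplicity p D)] (mod (int p ^ multiplicity p D)))"
  have z0: "0 \<le> z p n" if "p \<in> prime_factors D" for p n
    using ir that unfolding intersective_roots_def padic_seq_def by auto
  obtain x :: nat where x: "\<forall>p\<in>prime_factors D. [x = nat (z p (multiplicity p D))] (mod p ^ multiplicity p D)"
    using chinese_remainder_nat[of "prime_factors D" "\<lambda>p. p ^ multiplicity p D" "\<lambda>p. nat (z p (multiplicity p D))"]
      pp_coprime by (metis coprime_int_iff finite_set_mset of_nat_power)
  define r where "r = - ((- int x) mod int D)"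
  have rx: "[r = int x] (mod int D)" unfolding r_def
    by (metis cong_minus_minus_iff cong_mod_left cong_refl minus_minus)
  have "?P r"
  proof (intro conjI ballI)
    show "- int D < r" "r \<le> 0" unfolding r_def using D by auto
    fix p assume p: "p \<in> prime_factors D"
    have "[r = int x] (mod int p ^ multiplicity p D)" using rx pf_dvd_D[OF p] cong_dvd_modulus by blast
    moreover have "[int x = z p (multiplicity p D)] (mod int p ^ multiplicity p D)"
      using x p z0[OF p] by (metis cong_int_iff int_nat_eq of_nat_power)
    ultimately show "[r = z p (multiplicity p D)] (mod int p ^ multiplicity p D)" by (rule cong_trans)
  qed
  moreover have "r' = r'' " if "?P r'" "?P r''" for r' r''
  proof -
    have "[r' = r''] (mod int D)"
    proof (rule cong_all_pf)
      fix p assume p: "p \<in> prime_factors D"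
      then have "[r' = z p (multiplicity p D)] (mod int p ^ multiplicity p D)"
        "[r'' = z p (multiplicity p D)] (mod int p ^ multiplicity p D)" using that by auto
      then show "[r' = r''] (mod int p ^ multiplicity p D)" by (metis cong_sym cong_trans)
    qed (use D in auto)
    then obtain k where k: "r' - r'' = int D * k" by (auto simp: cong_iff_dvd_diff elim: dvdE)
    have "k = 0"
    proof (rule ccontr)
      assume "k \<noteq> 0"
      then have "\<bar>int D * k\<bar> \<ge> int D" using D by (simp add: abs_mult)
      then show False using k that by linarith
    qed
    then show ?thesis using k by simp
  qed
  ultimately have "\<exists>!r. ?P r" by blast
  then show ?thesis unfolding rd_def by (rule theI')
qed

lemma lam_dvd:
  assumes ir: "intersective_roots h z" and D: "D \<ge> 1"
    and t: "\<And>p. p\<in>prime_factors D \<Longrightarrow> [t = z p (multiplicity p D)] (mod (int p ^ multiplicity p D))"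
  shows "int (lam h z D) dvd poly h t"
proof -
  have "int (lam h z D) = (\<Prod>p\<in>prime_factors D. int p ^ (root_mult h p (z p) * multiplicity p D))"
    unfolding lam_def by simp
  also have "\<dots> dvd poly h t"
  proof (rule prod_dvd_coprime_int)
    fix p assume p: "p \<in> prime_factors D"
    then have pp: "prime p" by auto
    show "int p ^ (root_mult h p (z p) * multiplicity p D) dvd poly h t"
    proof (rule padic_taylor[OF pp])
      show "padic_seq p (z p)" using ir pp unfolding intersective_roots_def by auto
      show "padic_vanishes ((pderiv ^^ j) h) p (z p)" if "j < root_mult h p (z p)" for j
        using not_less_Least[OF that[unfolded root_mult_def]] by simp
      show "[t = z p (multiplicity p D)] (mod int p ^ multiplicity p D)" using t[OF p] .
    qed
  qed (simp, rule pp_coprime, auto)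
  finally show ?thesis .
qed

lemma lam_alt:
  assumes "D \<ge> 1" "finite S" "prime_factors D \<subseteq> S" "\<forall>p\<in>S. prime p"
  shows "lam h z D = (\<Prod>p\<in>S. p ^ (root_mult h p (z p) * multiplicity p D))"
  unfolding lam_def
proof (rule prod.mono_neutral_left[OF assms(2,3)], intro ballI)
  fix p assume "p \<in> S - prime_factors D"
  then have "multiplicity p D = 0" using assms by (auto simp: prime_factors_multiplicity)
  then show "p ^ (root_mult h p (z p) * multiplicity p D) = 1" by simp
qed

lemma lam_mult:
  assumes "q \<ge> 1" "d \<ge> 1"
  shows "lam h z (q * d) = lam h z q * lam h z d"
proof -
  let ?S = "prime_factors q \<union> prime_factors d"
  have S: "finite ?S" "\<forall>p\<in>?S. prime p" by auto
  have pf: "prime_factors (q*d) = ?S" using assms by (simp add: prime_factors_product)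
  have "lam h z (q*d) = (\<Prod>p\<in>?S. p ^ (root_mult h p (z p) * multiplicity p (q*d)))"
    using assms pf S by (intro lam_alt) auto
  also have "\<dots> = (\<Prod>p\<in>?S. p ^ (root_mult h p (z p) * multiplicity p q) * p ^ (root_mult h p (z p) * multiplicity p d))"
  proof (intro prod.cong refl)
    fix p assume "p \<in> ?S"
    then have "prime p" by auto
    then have "multiplicity p (q*d) = multiplicity p q + multiplicity p d"
      using assms by (intro prime_elem_multiplicity_mult_distrib) auto
    then show "p ^ (root_mult h p (z p) * multiplicity p (q*d)) = p ^ (root_mult h p (z p) * multiplicity p q) * p ^ (root_mult h p (z p) * multiplicity p d)"
      by (simp add: algebra_simps power_add)
  qed
  also have "\<dots> = lam h z q * lam h z d"
    using assms S lam_alt[of q "?S" h z] lam_alt[of d "?S" h z] by (simp add: prod.distrib)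
  finally show ?thesis .
qed

lemma rd_cong:
  assumes ir: "intersective_roots h z" and q: "q \<ge> 1" and d: "d \<ge> 1"
  shows "[rd z (q*d) = rd z d] (mod int d)"
proof (rule cong_all_pf)
  show "0 < d" using d by simp
  fix p assume p: "p \<in> prime_factors d"
  have pp: "prime p" using p by auto
  have pqd: "p \<in> prime_factors (q*d)" using p q d by (simp add: prime_factors_product)
  let ?v = "multiplicity p d" and ?V = "multiplicity p (q*d)"
  have vV: "?v \<le> ?V" using q d by (intro dvd_imp_multiplicity_le) auto
  have "[rd z (q*d) = z p ?V] (mod int p ^ ?V)" using rd_spec[OF ir, of "q*d"] q d pqd by auto
  then have 1: "[rd z (q*d) = z p ?V] (mod int p ^ ?v)"
    using vV by (metis cong_dvd_modulus le_imp_power_dvd)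
  have "z p ?V mod int p ^ ?v = z p ?v"
    using padic_coh[OF _ pp vV] ir pp unfolding intersective_roots_def by auto
  then have 2: "[z p ?V = z p ?v] (mod int p ^ ?v)"
    using ir pp unfolding intersective_roots_def padic_seq_def cong_def
    by (metis mod_mod_trivial)
  have 3: "[rd z d = z p ?v] (mod int p ^ ?v)" using rd_spec[OF ir d] p by auto
  show "[rd z (q*d) = rd z d] (mod int p ^ ?v)" using 1 2 3 by (metis cong_sym cong_trans)
qed

lemma lam_pos: "lam h z D > 0"
  unfolding lam_def by (intro prod_pos) (auto simp: prime_gt_0_nat)

lemma Hset_finite:
  assumes "degree h \<ge> 2" "D \<ge> 1"
  shows "finite (Hset h z D L)"
proof -
  define l where "l = int (lam h z D)"
  have l: "l > 0" unfolding l_def using lam_pos by simp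
  define K where "K = l * (int L + 1)"
  define f where "f = (\<lambda>y. rd z D + int D * y)"
  have s1: "sconst h \<ge> 1" unfolding sconst_def by simp
  have sub: "Hset h z D L \<subseteq> f -` (\<Union>v\<in>{1..K}. {t. poly (h - [:v:]) t = 0})"
  proof
    fix y assume y: "y \<in> Hset h z D L"
    define a where "a = poly h (f y)"
    have hd: "hd h z D y = a div l" unfolding hd_def a_def f_def l_def by simp
    have a1: "a div l \<ge> 1" using y hd unfolding Hset_def by auto
    have "real_of_int (a div l) < real L / real (sconst h)" using y hd unfolding Hset_def by auto
    also have "\<dots> \<le> real L" using s1 by (simp add: divide_le_eq) (metis mult_1_right mult_left_mono of_nat_0_le_iff of_nat_1 of_nat_mono s1 )
    finally have a2: "a div l \<le> int L" by linarith
    have am: "a = l * (a div l) + a mod l" by simp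
    have m0: "0 \<le> a mod l" "a mod l < l" using l by simp_all
    have "l * (a div l) \<ge> l * 1" using a1 l by (intro mult_left_mono) auto
    then have "a \<ge> 1" using am m0 l by linarith
    moreover have "a < K"
    proof -
      have "a < l * (a div l + 1)" using am m0 unfolding distrib_left by linarith
      moreover have "l * (a div l + 1) \<le> l * (int L + 1)" using a2 l by (intro mult_left_mono) auto
      ultimately show ?thesis unfolding K_def by linarith
    qed
    ultimately show "y \<in> f -` (\<Union>v\<in>{1..K}. {t. poly (h - [:v:]) t = 0})"
      unfolding a_def by auto
  qed
  have "finite (\<Union>v\<in>{1..K}. {t. poly (h - [:v:]) t = 0})"
  proof (intro finite_UN_I)
    fix v :: int
    have "h \<noteq> [:v:]" using assms by auto
    then have "h - [:v:] \<noteq> 0" by simp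
    then show "finite {t. poly (h - [:v:]) t = 0}" by (rule poly_roots_finite)
  qed simp
  moreover have "inj f" unfolding f_def inj_def using assms by auto
  ultimately show ?thesis using sub by (meson finite_subset finite_vimageI)
qed

lemma tot_ratio:
  assumes "q \<ge> 1" "d \<ge> 1"
  shows "real (totient (q*d)) / real (q*d) \<le> real (totient d) / real d"
proof -
  have eq: "real (totient n) / real n = (\<Prod>p\<in>prime_factors n. 1 - 1 / real p)" if "n \<ge> 1" for n
    using that by (simp add: totient_formula2)
  have sub: "prime_factors d \<subseteq> prime_factors (q*d)" using assms by (simp add: prime_factors_product)
  have "(\<Prod>p\<in>prime_factors (q*d). 1 - 1 / real p) =
     (\<Prod>p\<in>prime_factors (q*d) - prime_factors d. 1 - 1 / real p) * (\<Prod>p\<in>prime_factors d. 1 - 1 / real p)"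
    using sub by (simp add: prod.subset_diff)
  also have "\<dots> \<le> 1 * (\<Prod>p\<in>prime_factors d. 1 - 1 / real p)"
  proof (rule mult_right_mono)
    have f: "0 \<le> 1 - 1 / real p \<and> 1 - 1 / real p \<le> 1" if "p \<in> prime_factors n" for p n
    proof -
      have "real p \<ge> 1" using that by (auto simp: in_prime_factors_iff dest: prime_ge_1_nat)
      then show ?thesis by auto
    qed
    show "(\<Prod>p\<in>prime_factors (q*d) - prime_factors d. 1 - 1 / real p) \<le> 1"
      by (rule prod_le_1) (use f in blast)
    show "0 \<le> (\<Prod>p\<in>prime_factors d. 1 - 1 / real p)"
      by (rule prod_nonneg) (use f in blast)
  qed
  finally show ?thesis using assms eq[of "q*d"] eq[of d] by simp
qed

lemma nu_nonneg: "nu z D y \<ge> 0"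
proof -
  have "ln (real_of_int (rd z D + int D * y)) \<ge> 0" if "prime (rd z D + int D * y)"
    using prime_ge_1_int[OF that] by (simp del: of_int_add of_int_mult)
  then show ?thesis unfolding nu_def by (auto simp del: of_int_add of_int_mult)
qed

lemma key:
  assumes ir: "intersective_roots h z" and q: "q \<ge> 1" and d: "d \<ge> 1"
    and LL: "real L' \<le> real L / real (lam h z q)"
    and y: "y \<in> Hset h z (q*d) L'"
  defines "c \<equiv> (rd z (q*d) - rd z d) div int d"
  shows "c + int q * y \<in> Hset h z d L \<and>
         hd h z d (c + int q * y) = int (lam h z q) * hd h z (q*d) y \<and>
         nu z (q*d) y \<le> nu z d (c + int q * y)"
proof -
  let ?R = "rd z (q*d)" and ?r = "rd z d" and ?y' = "c + int q * y"
  have qd1: "q * d \<ge> 1" using q d by simp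
  have "int d dvd ?R - ?r" using rd_cong[OF ir q d] by (simp add: cong_iff_dvd_diff)
  then have Rr: "?R - ?r = int d * c" unfolding c_def by simp
  have N: "?r + int d * ?y' = ?R + int (q*d) * y" using Rr by (simp add: algebra_simps)
  have y1: "y \<ge> 1" using y unfolding Hset_def by auto
  have "- int (q*d) < ?R" "?r \<le> 0" using rd_spec[OF ir qd1] rd_spec[OF ir d] by auto
  then have "int d * (c + int q) > 0" using Rr by (simp add: algebra_simps)
  then have "c + int q > 0" using d by (simp add: zero_less_mult_iff)
  moreover have "int q * y \<ge> int q * 1" using y1 by (intro mult_left_mono) auto
  ultimately have y'1: "?y' \<ge> 1" by linarith
  define a where "a = poly h (?R + int (q*d) * y)"
  have "int (lam h z (q*d)) dvd a" unfolding a_def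
  proof (rule lam_dvd[OF ir qd1])
    fix p assume p: "p \<in> prime_factors (q*d)"
    have 1: "[?R = z p (multiplicity p (q*d))] (mod int p ^ multiplicity p (q*d))"
      using rd_spec[OF ir qd1] p by auto
    have "int p ^ multiplicity p (q*d) dvd int (q*d) * y"
      using pf_dvd_D[OF p] by simp
    then have "[int (q*d) * y = 0] (mod int p ^ multiplicity p (q*d))" by (simp add: cong_0_iff)
    then have "[?R + int (q*d) * y = z p (multiplicity p (q*d)) + 0] (mod int p ^ multiplicity p (q*d))"
      using 1 by (rule cong_add[rotated])
    then show "[?R + int (q*d) * y = z p (multiplicity p (q*d))] (mod int p ^ multiplicity p (q*d))" by simp
  qed
  then obtain k where k: "a = int (lam h z q) * int (lam h z d) * k"
    using lam_mult[OF q d] by (auto elim: dvdE)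
  have lq: "int (lam h z q) > 0" "int (lam h z d) > 0" using lam_pos by auto
  have hqd: "hd h z (q*d) y = k" unfolding hd_def a_def[symmetric] lam_mult[OF q d] k using lq by simp
  have hd': "hd h z d ?y' = int (lam h z q) * k" unfolding hd_def N a_def[symmetric] k using lq by simp
  have eq: "hd h z d ?y' = int (lam h z q) * hd h z (q*d) y" using hqd hd' by simp
  have k0: "k > 0" using y hqd unfolding Hset_def by auto
  have kL: "real_of_int k < real L' / real (sconst h)" using y hqd unfolding Hset_def by auto
  have "sconst h > 0" unfolding sconst_def by simp
  then have s0: "real (sconst h) > 0" by simp
  have "real (lam h z q) * real L' \<le> real L" using LL lq by (simp add: field_simps)
  then have m2: "real (lam h z q) * real L' / real (sconst h) \<le> real L / real (sconst h)"
    using s0 by (intro divide_right_mono) auto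
  have "real (lam h z q) * real_of_int k < real (lam h z q) * (real L' / real (sconst h))"
    using kL lq by (intro mult_strict_left_mono) auto
  then have "real (lam h z q) * real_of_int k < real L / real (sconst h)" using m2 by simp
  then have H: "?y' \<in> Hset h z d L" unfolding Hset_def using hd' y'1 k0 lq by auto
  have nu: "nu z (q*d) y \<le> nu z d ?y'"
  proof (cases "prime (?R + int (q*d) * y)")
    case True
    have "ln (real_of_int (?R + int (q*d) * y)) \<ge> 0"
      using prime_ge_1_int[OF True] by (simp del: of_int_add of_int_mult of_nat_mult)
    then have "real (totient (q*d)) / real (q*d) * ln (real_of_int (?R + int (q*d) * y))
        \<le> real (totient d) / real d * ln (real_of_int (?R + int (q*d) * y))"
      using tot_ratio[OF q d] by (intro mult_right_mono)
    then show ?thesis unfolding nu_def using True y1 y'1 N by (simp del: of_int_add of_int_mult of_nat_mult)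
  next
    case False
    then show ?thesis unfolding nu_def using nu_nonneg[of z d ?y'] by (simp add: nu_def)
  qed
  show ?thesis using H eq nu by blast
qed

theorem proposition1:
  fixes h :: "int poly" and z :: "nat \<Rightarrow> nat \<Rightarrow> int"
    and L L' q d :: nat and x :: int and B B' :: "int set"
  assumes "degree h \<ge> 2" and "lead_coeff h > 0"
    and "intersective_roots h z"
    and "q \<ge> 1" and "d \<ge> 1"
    and "real L' \<le> real L / real (lam h z q)"
    and "B \<subseteq> {1..int L}"
    and "B' \<subseteq> {l \<in> {1..int L'}. x + l * int (lam h z q) \<in> B}"
  shows "Rcount h z (q * d) B' L' \<le> Rcount h z d B L"
proof -
  note ir = assms(3) and q = assms(4) and d = assms(5) and LL = assms(6)
  define lq where "lq = int (lam h z q)"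
  have lq0: "lq > 0" unfolding lq_def using lam_pos by simp
  define c where "c = (rd z (q*d) - rd z d) div int d"
  define \<phi> where "\<phi> = (\<lambda>(l::int, y::int). (x + l * lq, c + int q * y))"
  define H' where "H' = Hset h z (q*d) L'"
  define H where "H = Hset h z d L"
  define F where "F = (\<lambda>(l, y). if l + hd h z (q*d) y \<in> B' then nu z (q*d) y else 0)"
  define G where "G = (\<lambda>(u, v). if u + hd h z d v \<in> B then nu z d v else 0)"
  have finB: "finite B" using assms(7) finite_subset by blast
  have "B' \<subseteq> {1..int L'}" using assms(8) by auto
  then have finB': "finite B'" using finite_subset by blast
  have finH: "finite H" unfolding H_def using assms(1) d by (rule Hset_finite)
  have G0: "G p \<ge> 0" for p unfolding G_def using nu_nonneg by (auto split: prod.splits)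
  have "Rcount h z (q * d) B' L' = (\<Sum>p\<in>B' \<times> H'. F p)"
    unfolding Rcount_def F_def H'_def by (simp add: sum.cartesian_product)
  also have "\<dots> \<le> (\<Sum>p\<in>B' \<times> H'. G (\<phi> p))"
  proof (rule sum_mono)
    fix p assume p: "p \<in> B' \<times> H'"
    obtain l y where ly: "p = (l, y)" by fastforce
    have l: "l \<in> B'" and y: "y \<in> H'" using p ly by auto
    note K = key[OF ir q d LL y[unfolded H'_def], folded c_def]
    show "F p \<le> G (\<phi> p)"
    proof (cases "l + hd h z (q*d) y \<in> B'")
      case True
      then have "x + (l + hd h z (q*d) y) * lq \<in> B" using assms(8) unfolding lq_def by auto
      then have "x + l * lq + hd h z d (c + int q * y) \<in> B"
        using K unfolding lq_def by (simp add: algebra_simps)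
      then show ?thesis unfolding F_def G_def \<phi>_def ly using True K by simp
    next
      case False
      then show ?thesis using G0[of "\<phi> p"] unfolding F_def ly by simp
    qed
  qed
  also have "\<dots> = (\<Sum>p\<in>\<phi> ` (B' \<times> H'). G p)"
  proof (rule sum.reindex[symmetric, unfolded comp_def])
    show "inj_on \<phi> (B' \<times> H')" unfolding \<phi>_def inj_on_def using lq0 q by auto
  qed
  also have "\<dots> \<le> (\<Sum>p\<in>B \<times> H. G p)"
  proof (rule sum_mono2)
    show "finite (B \<times> H)" using finB finH by simp
    show "\<phi> ` (B' \<times> H') \<subseteq> B \<times> H"
    proof
      fix p assume "p \<in> \<phi> ` (B' \<times> H')"
      then obtain l y where l: "l \<in> B'" and y: "y \<in> H'" and p: "p = \<phi> (l, y)" by auto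
      note K = key[OF ir q d LL y[unfolded H'_def], folded c_def]
      have "x + l * lq \<in> B" using l assms(8) unfolding lq_def by auto
      then show "p \<in> B \<times> H" using K unfolding p \<phi>_def H_def by simp
    qed
  qed (use G0 in auto)
  also have "\<dots> = Rcount h z d B L"
    unfolding Rcount_def G_def H_def by (simp add: sum.cartesian_product)
  finally show ?thesis .
qed
end
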